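(* The InDC method (with $M$ uniform quadrature nodes excluding the left-most point) constructed with stiffly accurate IRK methods with invertible coefficient matrices in the prediction and correction steps can be considered again as an implicit Runge–Kutta method, which is stiffly accurate and whose Butcher coefficient matrix $A$ is invertible.
   Context: InDC-IRK method for an ODE $y'=F(y)$ over one step $[t_n,t_n+H]$: nodes $\tau_m=t_n+mh$, $h=H/M$; $\alpha_j$ ($j=1,\dots,M$) the Lagrange basis polynomials of degree $M-1$ for $\tau_1,\dots,\tau_M$; $S^m(\bar w)=\frac1h\sum_jw_j\int_{\tau_m}^{\tau_{m+1}}\alpha_j$, $S^{c_{mi}}(\bar w)=\frac1h\sum_jw_j\int_{\tau_m}^{\tau_m+c_ih}\alpha_j$, $P^{c_{mi}}(\bar w)=\sum_jw_j\alpha_j(\tau_m+c_ih)$. Prediction: IRK method (tableau $A^{(0)},b^{(0)},c^{(0)}$) on each substep with step $h$. Correction $k=1,\dots,K$ (tableau $(a_{ij}),(b_i),(c_i)$): $y^{(k)}_0=y_n$, $Y_{mi}=y^{(k)}_m+hS^{c_{mi}}(\bar F^{(k-1)})+h\sum_ja_{ij}\Delta K_{mj}$, $y^{(k)}_{m+1}=y^{(k)}_m+hS^m(\bar F^{(k-1)})+h\sum_ib_i\Delta K_{mi}$, $\Delta K_{mi}=F(Y_{mi})-P^{c_{mi}}(\bar F^{(k-1)})$, $\bar F^{(k-1)}=(F(y^{(k-1)}_j))_{j=1}^M$; output $y^{(K)}_M$. A RK method is stiffly accurate if $b^T=e_s^TA$ (last row of $A$ equals $b^T$). *)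

theory Defs
  imports "HOL-Analysis.Analysis" "Jordan_Normal_Form.Matrix"
begin

text \<open>Runge--Kutta tableaux are given as a square real matrix A (Jordan_Normal_Form mat),
  a weight vector b and a node vector c; stages are indexed from 0.\<close>

definition stiffly_accurate :: "real mat \<Rightarrow> real vec \<Rightarrow> bool" where
  "stiffly_accurate A b \<longleftrightarrow>
     (let s = dim_vec b in 0 < s \<and> A \<in> carrier_mat s s \<and> row A (s - 1) = b)"

text \<open>Stage equations and output of an RK method (A,b) applied with step H to y' = F(y)
  (autonomous, so the nodes c do not enter).\<close>

definition rk_stage_eqs :: "real mat \<Rightarrow> real \<Rightarrow> ('a::real_vector \<Rightarrow> 'a) \<Rightarrow> 'a \<Rightarrow> (nat \<Rightarrow> 'a) \<Rightarrow> bool" where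
  "rk_stage_eqs A H F yn Z \<longleftrightarrow>
     (\<forall>i < dim_row A. Z i = yn + H *\<^sub>R (\<Sum>j < dim_col A. (A $$ (i, j)) *\<^sub>R F (Z j)))"

definition rk_output :: "real vec \<Rightarrow> real \<Rightarrow> ('a::real_vector \<Rightarrow> 'a) \<Rightarrow> 'a \<Rightarrow> (nat \<Rightarrow> 'a) \<Rightarrow> 'a" where
  "rk_output b H F yn Z = yn + H *\<^sub>R (\<Sum>j < dim_vec b. (b $ j) *\<^sub>R F (Z j))"

definition node :: "real \<Rightarrow> real \<Rightarrow> nat \<Rightarrow> real" where
  "node tn h m = tn + real m * h"

definition lagr :: "nat \<Rightarrow> real \<Rightarrow> real \<Rightarrow> nat \<Rightarrow> real \<Rightarrow> real" where
  "lagr M tn h j t = (\<Prod>l \<in> {1..M} - {j}. (t - node tn h l) / (node tn h j - node tn h l))"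

definition oint :: "real \<Rightarrow> real \<Rightarrow> (real \<Rightarrow> real) \<Rightarrow> real" where
  "oint a b f = (if a \<le> b then integral {a..b} f else - integral {b..a} f)"

definition quadS :: "nat \<Rightarrow> real \<Rightarrow> real \<Rightarrow> nat \<Rightarrow> (nat \<Rightarrow> 'a::real_vector) \<Rightarrow> 'a" where
  "quadS M tn h m w = (1 / h) *\<^sub>R
     (\<Sum>j \<in> {1..M}. oint (node tn h m) (node tn h (Suc m)) (lagr M tn h j) *\<^sub>R w j)"

definition quadSc :: "nat \<Rightarrow> real \<Rightarrow> real \<Rightarrow> nat \<Rightarrow> real \<Rightarrow> (nat \<Rightarrow> 'a::real_vector) \<Rightarrow> 'a" where
  "quadSc M tn h m ci w = (1 / h) *\<^sub>R
     (\<Sum>j \<in> {1..M}. oint (node tn h m) (node tn h m + ci * h) (lagr M tn h j) *\<^sub>R w j)"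

definition quadP :: "nat \<Rightarrow> real \<Rightarrow> real \<Rightarrow> nat \<Rightarrow> real \<Rightarrow> (nat \<Rightarrow> 'a::real_vector) \<Rightarrow> 'a" where
  "quadP M tn h m ci w = (\<Sum>j \<in> {1..M}. lagr M tn h j (node tn h m + ci * h) *\<^sub>R w j)"

text \<open>InDC step values. Y k m i is the stage value Y_{m,i+1} of sweep k
  (k = 0: prediction, k \<ge> 1: k-th correction); indc_y k m is y^{(k)}_m.
  Here h is the substep H/M.\<close>

fun indc_y :: "nat \<Rightarrow> real \<Rightarrow> real \<Rightarrow> ('a::real_vector \<Rightarrow> 'a) \<Rightarrow> 'a \<Rightarrow> real vec \<Rightarrow> real vec \<Rightarrow> real vec
     \<Rightarrow> (nat \<Rightarrow> nat \<Rightarrow> nat \<Rightarrow> 'a) \<Rightarrow> nat \<Rightarrow> nat \<Rightarrow> 'a" where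
  "indc_y M tn h F yn b0 b c Y 0 0 = yn"
| "indc_y M tn h F yn b0 b c Y 0 (Suc m) =
     indc_y M tn h F yn b0 b c Y 0 m + h *\<^sub>R (\<Sum>i < dim_vec b0. (b0 $ i) *\<^sub>R F (Y 0 m i))"
| "indc_y M tn h F yn b0 b c Y (Suc k) 0 = yn"
| "indc_y M tn h F yn b0 b c Y (Suc k) (Suc m) =
     indc_y M tn h F yn b0 b c Y (Suc k) m
     + h *\<^sub>R quadS M tn h m (\<lambda>j. F (indc_y M tn h F yn b0 b c Y k j))
     + h *\<^sub>R (\<Sum>i < dim_vec b. (b $ i) *\<^sub>R
          (F (Y (Suc k) m i) - quadP M tn h m (c $ i) (\<lambda>j. F (indc_y M tn h F yn b0 b c Y k j))))"

definition indc_stage_eqs :: "nat \<Rightarrow> nat \<Rightarrow> real mat \<Rightarrow> real vec \<Rightarrow> real mat \<Rightarrow> real vec \<Rightarrow> real vec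
     \<Rightarrow> real \<Rightarrow> real \<Rightarrow> ('a::real_vector \<Rightarrow> 'a) \<Rightarrow> 'a \<Rightarrow> (nat \<Rightarrow> nat \<Rightarrow> nat \<Rightarrow> 'a) \<Rightarrow> bool" where
  "indc_stage_eqs M K A0 b0 a b c tn H F yn Y \<longleftrightarrow>
     (let h = H / real M;
          yv = indc_y M tn h F yn b0 b c Y in
       (\<forall>m < M. \<forall>i < dim_row A0.
          Y 0 m i = yv 0 m + h *\<^sub>R (\<Sum>j < dim_col A0. (A0 $$ (i, j)) *\<^sub>R F (Y 0 m j))) \<and>
       (\<forall>k \<in> {1..K}. \<forall>m < M. \<forall>i < dim_row a.
          Y k m i = yv k m
            + h *\<^sub>R quadSc M tn h m (c $ i) (\<lambda>j. F (yv (k - 1) j))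
            + h *\<^sub>R (\<Sum>j < dim_col a. (a $$ (i, j)) *\<^sub>R
                 (F (Y k m j) - quadP M tn h m (c $ j) (\<lambda>j'. F (yv (k - 1) j'))))))"

definition indc_output :: "nat \<Rightarrow> nat \<Rightarrow> real vec \<Rightarrow> real vec \<Rightarrow> real vec
     \<Rightarrow> real \<Rightarrow> real \<Rightarrow> ('a::real_vector \<Rightarrow> 'a) \<Rightarrow> 'a \<Rightarrow> (nat \<Rightarrow> nat \<Rightarrow> nat \<Rightarrow> 'a) \<Rightarrow> 'a" where
  "indc_output M K b0 b c tn H F yn Y = indc_y M tn (H / real M) F yn b0 b c Y K M"

definition indc_index :: "nat \<Rightarrow> nat \<Rightarrow> nat \<Rightarrow> nat \<Rightarrow> (nat \<times> nat \<times> nat) set" where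
  "indc_index M K s0 s = {(k, m, i). k \<le> K \<and> m < M \<and> i < (if k = 0 then s0 else s)}"

end

theory Submission
  imports Defs "Jordan_Normal_Form.Determinant"
begin


definition Lg :: "nat \<Rightarrow> nat \<Rightarrow> real \<Rightarrow> real" where
  "Lg M j x = (\<Prod>l\<in>{1..M}-{j}. (x - real l) / (real j - real l))"

definition WC :: "nat \<Rightarrow> nat \<Rightarrow> real \<Rightarrow> nat \<Rightarrow> real" where
  "WC M m ci j = oint (real m) (real m + ci) (Lg M j)"

definition WP :: "nat \<Rightarrow> nat \<Rightarrow> real \<Rightarrow> nat \<Rightarrow> real" where
  "WP M m ci j = Lg M j (real m + ci)"

lemma lagr_eq: assumes "h \<noteq> 0" shows "lagr M tn h j (tn + x * h) = Lg M j x"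
  unfolding lagr_def Lg_def
proof (rule prod.cong[OF refl])
  fix l assume "l \<in> {1..M} - {j}"
  then have "real j - real l \<noteq> 0" by auto
  then show "(tn + x * h - node tn h l) / (node tn h j - node tn h l) = (x - real l) / (real j - real l)"
    using assms unfolding node_def by (simp add: field_simps)
qed

lemma int_affine:
  fixes f :: "real \<Rightarrow> real"
  assumes h: "h > 0" and le: "x0 \<le> x1"
  shows "integral {tn + x0 * h .. tn + x1 * h} f = h * integral {x0..x1} (\<lambda>x. f (tn + x * h))"
proof -
  have "integral {tn + x0 * h .. tn + x1 * h} f = integral {x0*h..x1*h} (\<lambda>x. f (x + tn))"
    using integral_shift_real_ivl[of "tn + x0 * h" tn "tn + x1 * h" f] by simp
  also have img: "(\<lambda>x. x / h) ` {x0*h..x1*h} = {x0..x1}"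
    using image_affinity_atLeastAtMost_div[of h 0 "x0*h" "x1*h"] h le
    by (auto simp: mult_right_mono)
  have "integral ((\<lambda>x. x / h) ` {x0*h..x1*h}) (\<lambda>x. f (h * x + tn)) = (1 / \<bar>h\<bar>) *\<^sub>R integral {x0*h..x1*h} (\<lambda>x. f (x + tn))"
    using integral_stretch_real[of h "x0*h" "x1*h" "\<lambda>x. f (x + tn)"] h by simp
  then have "integral {x0*h..x1*h} (\<lambda>x. f (x + tn)) = h * integral {x0..x1} (\<lambda>x. f (tn + x * h))"
    using h unfolding img by (simp add: field_simps add.commute mult.commute)
  finally show ?thesis .
qed

lemma oint_affine:
  fixes f :: "real \<Rightarrow> real"
  assumes h: "h > 0"
  shows "oint (tn + x0 * h) (tn + x1 * h) f = h * oint x0 x1 (\<lambda>x. f (tn + x * h))"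
  using int_affine[OF h, of x0 x1 tn f] int_affine[OF h, of x1 x0 tn f] h
  unfolding oint_def by (auto simp: mult_le_cancel_right)

lemma quadP_eq: assumes "h \<noteq> 0"
  shows "quadP M tn h m ci w = (\<Sum>j\<in>{1..M}. WP M m ci j *\<^sub>R w j)"
proof -
  have "node tn h m + ci * h = tn + (real m + ci) * h" unfolding node_def by (simp add: algebra_simps)
  then show ?thesis unfolding quadP_def WP_def using lagr_eq[OF assms] by simp
qed

lemma quadSc_eq: assumes "h > 0"
  shows "quadSc M tn h m ci w = (\<Sum>j\<in>{1..M}. WC M m ci j *\<^sub>R w j)"
proof -
  have e1: "node tn h m = tn + real m * h" unfolding node_def by simp
  have e2: "node tn h m + ci * h = tn + (real m + ci) * h" unfolding node_def by (simp add: algebra_simps)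
  have "oint (node tn h m) (node tn h m + ci * h) (lagr M tn h j) = h * WC M m ci j" for j
  proof -
    have "oint (node tn h m) (node tn h m + ci * h) (lagr M tn h j)
        = oint (tn + real m * h) (tn + (real m + ci) * h) (lagr M tn h j)"
      by (simp add: e1 distrib_right add.assoc)
    also have "\<dots> = h * oint (real m) (real m + ci) (\<lambda>x. lagr M tn h j (tn + x * h))"
      by (rule oint_affine[OF assms])
    also have "\<dots> = h * WC M m ci j"
      unfolding WC_def using lagr_eq[of h M tn j] assms by simp
    finally show ?thesis .
  qed
  then show ?thesis unfolding quadSc_def using assms
    by (simp add: scaleR_sum_right)
qed

lemma quadS_eq: assumes "h > 0"
  shows "quadS M tn h m w = (\<Sum>j\<in>{1..M}. WC M m 1 j *\<^sub>R w j)"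
proof -
  have "quadS M tn h m w = quadSc M tn h m 1 w"
    unfolding quadS_def quadSc_def node_def by (simp add: algebra_simps)
  then show ?thesis using quadSc_eq[OF assms] by simp
qed

definition ev :: "('i \<Rightarrow> 'a::real_vector) \<Rightarrow> 'i set \<Rightarrow> ('i \<Rightarrow> real) \<Rightarrow> 'a" where
  "ev g I \<phi> = (\<Sum>q\<in>I. \<phi> q *\<^sub>R g q)"

definition dl :: "'i \<Rightarrow> 'i \<Rightarrow> real" where
  "dl q = (\<lambda>p. if p = q then 1 else 0)"

lemma ev_add: "ev g I (\<lambda>p. \<phi> p + \<psi> p) = ev g I \<phi> + ev g I \<psi>"
  unfolding ev_def by (simp add: scaleR_add_left sum.distrib)
lemma ev_diff: "ev g I (\<lambda>p. \<phi> p - \<psi> p) = ev g I \<phi> - ev g I \<psi>"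
  unfolding ev_def by (simp add: scaleR_diff_left sum_subtractf)
lemma ev_scale: "ev g I (\<lambda>p. r * \<phi> p) = r *\<^sub>R ev g I \<phi>"
  unfolding ev_def by (simp add: scaleR_sum_right)
lemma ev_sum: "ev g I (\<lambda>p. \<Sum>j\<in>J. \<phi> j p) = (\<Sum>j\<in>J. ev g I (\<phi> j))"
  unfolding ev_def by (simp add: scaleR_sum_left sum.swap[of _ I])
lemma ev_zero: "ev g I (\<lambda>p. 0) = 0"
  unfolding ev_def by simp
lemma ev_dl: "finite I \<Longrightarrow> ev g I (dl q) = (if q \<in> I then g q else 0)"
proof -
  have "ev g I (dl q) = (\<Sum>p\<in>I. if p = q then g q else 0)"
    unfolding ev_def dl_def by (rule sum.cong) auto
  also assume "finite I"
  then have "(\<Sum>p\<in>I. if p = q then g q else 0) = (if q \<in> I then g q else 0)"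
    by (simp add: sum.delta')
  finally show ?thesis .
qed

lemmas ev_simps = ev_add ev_diff ev_scale ev_sum ev_zero



lemma sum_1M: "(\<Sum>j\<in>{1..M}. f j) = (\<Sum>j<M. f (Suc j))"
proof -
  have "{1..M} = {Suc 0..M}" by simp
  then show ?thesis using sum.atLeast1_atMost_eq[of f M] by simp
qed

lemma quadS_eq': "h > 0 \<Longrightarrow> quadS M tn h m w = (\<Sum>j<M. WC M m 1 (Suc j) *\<^sub>R w (Suc j))"
  using quadS_eq[of h M tn m w] sum_1M[of "\<lambda>j. WC M m 1 j *\<^sub>R w j" M] by simp
lemma quadSc_eq': "h > 0 \<Longrightarrow> quadSc M tn h m ci w = (\<Sum>j<M. WC M m ci (Suc j) *\<^sub>R w (Suc j))"
  using quadSc_eq[of h M tn m ci w] sum_1M[of "\<lambda>j. WC M m ci j *\<^sub>R w j" M] by simp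
lemma quadP_eq': "h \<noteq> 0 \<Longrightarrow> quadP M tn h m ci w = (\<Sum>j<M. WP M m ci (Suc j) *\<^sub>R w (Suc j))"
  using quadP_eq[of h M tn m ci w] sum_1M[of "\<lambda>j. WP M m ci j *\<^sub>R w j" M] by simp

lemma inv_kernel:
  fixes A :: "real mat"
  assumes inv: "invertible_mat A" and carr: "A \<in> carrier_mat n n"
    and h: "\<forall>i<n. (\<Sum>j<n. A $$ (i, j) * v j) = 0" and j: "j < n"
  shows "v j = 0"
proof -
  obtain B where AB: "A * B = 1\<^sub>m n" and BA: "B * A = 1\<^sub>m (dim_row B)"
    using inv carr unfolding invertible_mat_def inverts_mat_def by auto
  have cB: "dim_col B = n" using arg_cong[OF AB, of dim_col] by simp
  have rB: "dim_row B = n" using arg_cong[OF BA, of dim_col] carr by simp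
  have Bc: "B \<in> carrier_mat n n" using cB rB by auto
  define w where "w = vec n v"
  have wc: "w \<in> carrier_vec n" unfolding w_def by simp
  have Aw: "A *\<^sub>v w = 0\<^sub>v n"
  proof (rule eq_vecI)
    fix i assume "i < dim_vec (0\<^sub>v n :: real vec)"
    then have i: "i < n" by simp
    have "(A *\<^sub>v w) $ i = (\<Sum>j\<in>{0..<n}. A $$ (i, j) * v j)"
      using i carr unfolding w_def by (simp add: scalar_prod_def)
    also have "\<dots> = 0" using h i by (simp add: atLeast0LessThan)
    finally show "(A *\<^sub>v w) $ i = 0\<^sub>v n $ i" using i by simp
  qed (use carr in simp)
  have "w = (B * A) *\<^sub>v w" using BA rB wc by simp
  also have "\<dots> = B *\<^sub>v (A *\<^sub>v w)" using Bc carr wc by simp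
  also have "\<dots> = 0\<^sub>v n" unfolding Aw
    by (rule eq_vecI) (use Bc in \<open>auto simp: scalar_prod_def\<close>)
  finally have "w $ j = 0" using j by simp
  then show ?thesis using j unfolding w_def by simp
qed

locale indc_setup =
  fixes M K :: nat and A0 a :: "real mat" and b0 b c :: "real vec"
  assumes M1: "M \<ge> 1"
    and sa0: "stiffly_accurate A0 b0" and inv0: "invertible_mat A0"
    and sa: "stiffly_accurate a b" and inva: "invertible_mat a"
    and dimc: "dim_vec c = dim_vec b" and cdef: "\<forall>i < dim_vec c. c $ i = (\<Sum>j < dim_vec b. a $$ (i, j))"
    and bsum: "(\<Sum>i < dim_vec b. b $ i) = 1"
begin

abbreviation "s0 \<equiv> dim_vec b0"
abbreviation "s \<equiv> dim_vec b"
abbreviation "I \<equiv> indc_index M K s0 s"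

definition lst :: "nat \<Rightarrow> nat" where "lst k = (if k = 0 then s0 - 1 else s - 1)"

lemma s0_pos: "s0 > 0" using sa0 unfolding stiffly_accurate_def Let_def by auto
lemma s_pos: "s > 0" using sa unfolding stiffly_accurate_def Let_def by auto
lemma A0_carr: "A0 \<in> carrier_mat s0 s0" using sa0 unfolding stiffly_accurate_def Let_def by auto
lemma a_carr: "a \<in> carrier_mat s s" using sa unfolding stiffly_accurate_def Let_def by auto
lemma A0_last: "j < s0 \<Longrightarrow> A0 $$ (s0 - 1, j) = b0 $ j"
proof -
  assume j: "j < s0"
  have "row A0 (s0 - 1) = b0" using sa0 unfolding stiffly_accurate_def Let_def by auto
  then have "row A0 (s0 - 1) $ j = b0 $ j" by simp
  then show ?thesis using j A0_carr s0_pos by (simp add: row_def)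
qed
lemma a_last: "j < s \<Longrightarrow> a $$ (s - 1, j) = b $ j"
proof -
  assume j: "j < s"
  have "row a (s - 1) = b" using sa unfolding stiffly_accurate_def Let_def by auto
  then have "row a (s - 1) $ j = b $ j" by simp
  then show ?thesis using j a_carr s_pos by (simp add: row_def)
qed
lemma c_last: "c $ (s - 1) = 1"
proof -
  have "c $ (s - 1) = (\<Sum>j < s. a $$ (s - 1, j))" using cdef dimc s_pos by auto
  also have "\<dots> = (\<Sum>j < s. b $ j)" using a_last by simp
  finally show ?thesis using bsum by simp
qed

lemma finI: "finite I"
proof -
  have "I \<subseteq> {..K} \<times> {..<M} \<times> {..<max s0 s}" unfolding indc_index_def by (auto simp: less_max_iff_disj split: if_splits)
  then show ?thesis by (rule finite_subset) auto
qed

lemma lst_lt: "lst k < (if k = 0 then s0 else s)"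
  unfolding lst_def using s0_pos s_pos by auto

lemma lst_in: "k \<le> K \<Longrightarrow> m < M \<Longrightarrow> (k, m, lst k) \<in> I"
  unfolding indc_index_def lst_def using s0_pos s_pos by auto

fun yc :: "nat \<Rightarrow> nat \<Rightarrow> nat \<times> nat \<times> nat \<Rightarrow> real" where
  "yc 0 0 = (\<lambda>p. 0)"
| "yc 0 (Suc m) = (\<lambda>p. yc 0 m p + (1 / real M) * (\<Sum>i<s0. b0 $ i * dl (0, m, i) p))"
| "yc (Suc k) 0 = (\<lambda>p. 0)"
| "yc (Suc k) (Suc m) = (\<lambda>p. yc (Suc k) m p
     + (1 / real M) * (\<Sum>j<M. WC M m 1 (Suc j) * dl (k, j, lst k) p)
     + (1 / real M) * (\<Sum>i<s. b $ i * (dl (Suc k, m, i) p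
          - (\<Sum>j<M. WP M m (c $ i) (Suc j) * dl (k, j, lst k) p))))"

definition sc :: "nat \<times> nat \<times> nat \<Rightarrow> nat \<times> nat \<times> nat \<Rightarrow> real" where
  "sc p = (case p of (k, m, i) \<Rightarrow>
     if k = 0 then (\<lambda>q. yc 0 m q + (1 / real M) * (\<Sum>j<s0. A0 $$ (i, j) * dl (0, m, j) q))
     else (\<lambda>q. yc k m q
     + (1 / real M) * (\<Sum>j<M. WC M m (c $ i) (Suc j) * dl (k - 1, j, lst (k - 1)) q)
     + (1 / real M) * (\<Sum>j<s. a $$ (i, j) * (dl (k, m, j) q
          - (\<Sum>j'<M. WP M m (c $ j) (Suc j') * dl (k - 1, j', lst (k - 1)) q)))))"

lemma sc_last: "sc (k, m, lst k) = yc k (Suc m)"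
proof (cases k)
  case 0
  then show ?thesis unfolding sc_def lst_def using A0_last by (simp add: fun_eq_iff)
next
  case (Suc k')
  then show ?thesis unfolding sc_def using a_last c_last by (simp add: fun_eq_iff lst_def)
qed

lemma ev_yc0: "m < M \<Longrightarrow> ev g I (yc 0 (Suc m)) = ev g I (yc 0 m) + (1 / real M) *\<^sub>R (\<Sum>i<s0. b0 $ i *\<^sub>R g (0, m, i))"
  by (simp only: yc.simps ev_simps ev_dl[OF finI]) (simp add: indc_index_def)

lemma ev_ycS: "k < K \<Longrightarrow> m < M \<Longrightarrow> ev g I (yc (Suc k) (Suc m)) = ev g I (yc (Suc k) m)
   + (1 / real M) *\<^sub>R (\<Sum>j<M. WC M m 1 (Suc j) *\<^sub>R g (k, j, lst k))
   + (1 / real M) *\<^sub>R (\<Sum>i<s. b $ i *\<^sub>R (g (Suc k, m, i)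
          - (\<Sum>j<M. WP M m (c $ i) (Suc j) *\<^sub>R g (k, j, lst k))))"
  by (simp only: yc.simps ev_simps ev_dl[OF finI]) (simp add: indc_index_def lst_lt)

lemma sc_0: "sc (0, m, i) = (\<lambda>q. yc 0 m q + (1 / real M) * (\<Sum>j<s0. A0 $$ (i, j) * dl (0, m, j) q))"
  unfolding sc_def by simp

lemma sc_S: "sc (Suc k, m, i) = (\<lambda>q. yc (Suc k) m q
     + (1 / real M) * (\<Sum>j<M. WC M m (c $ i) (Suc j) * dl (k, j, lst k) q)
     + (1 / real M) * (\<Sum>j<s. a $$ (i, j) * (dl (Suc k, m, j) q
          - (\<Sum>j'<M. WP M m (c $ j) (Suc j') * dl (k, j', lst k) q))))"
  unfolding sc_def by simp

lemma ev_sc0: "m < M \<Longrightarrow> ev g I (sc (0, m, i)) = ev g I (yc 0 m) + (1 / real M) *\<^sub>R (\<Sum>j<s0. A0 $$ (i, j) *\<^sub>R g (0, m, j))"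
  by (simp only: sc_0 ev_simps ev_dl[OF finI]) (simp add: indc_index_def)

lemma ev_scS: "k < K \<Longrightarrow> m < M \<Longrightarrow> ev g I (sc (Suc k, m, i)) = ev g I (yc (Suc k) m)
   + (1 / real M) *\<^sub>R (\<Sum>j<M. WC M m (c $ i) (Suc j) *\<^sub>R g (k, j, lst k))
   + (1 / real M) *\<^sub>R (\<Sum>j<s. a $$ (i, j) *\<^sub>R (g (Suc k, m, j)
          - (\<Sum>j'<M. WP M m (c $ j) (Suc j') *\<^sub>R g (k, j', lst k))))"
  by (simp only: sc_S ev_simps ev_dl[OF finI]) (simp add: indc_index_def lst_lt)

lemma quadSc_1: "quadSc M tn h m 1 w = quadS M tn h m w"
  unfolding quadS_def quadSc_def node_def by (simp add: algebra_simps)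

lemma Y_rep:
  fixes F :: "'a::real_vector \<Rightarrow> 'a" and Y :: "nat \<Rightarrow> nat \<Rightarrow> nat \<Rightarrow> 'a"
  assumes H: "H > 0" and kK: "k \<le> K"
    and Q: "\<forall>k'<k. \<forall>m<M. Y k' m (lst k') = indc_y M tn (H / real M) F yn b0 b c Y k' (Suc m)"
  shows "\<forall>m\<le>M. indc_y M tn (H / real M) F yn b0 b c Y k m = yn + H *\<^sub>R ev (\<lambda>(k, m, i). F (Y k m i)) I (yc k m)"
proof -
  let ?h = "H / real M"
  let ?g = "\<lambda>(k, m, i). F (Y k m i)"
  have hpos: "?h > 0" using H M1 by simp
  have hne: "?h \<noteq> 0" using H M1 by simp
  show ?thesis
  proof (cases k)
    case 0
    show ?thesis
    proof (intro allI impI)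
      fix m show "m \<le> M \<Longrightarrow> indc_y M tn ?h F yn b0 b c Y k m = yn + H *\<^sub>R ev ?g I (yc k m)"
      proof (induction m)
        case 0 then show ?case using \<open>k = 0\<close> by (simp add: ev_zero)
      next
        case (Suc m)
        then have m: "m < M" by simp
        have "indc_y M tn ?h F yn b0 b c Y k (Suc m)
            = indc_y M tn ?h F yn b0 b c Y 0 m + ?h *\<^sub>R (\<Sum>i<s0. b0 $ i *\<^sub>R F (Y 0 m i))"
          using \<open>k = 0\<close> by simp
        also have "\<dots> = yn + H *\<^sub>R ev ?g I (yc 0 m) + ?h *\<^sub>R (\<Sum>i<s0. b0 $ i *\<^sub>R F (Y 0 m i))"
          using Suc \<open>k = 0\<close> by simp
        also have "\<dots> = yn + H *\<^sub>R ev ?g I (yc 0 (Suc m))"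
          using ev_yc0[OF m, of ?g] by (simp add: scaleR_add_right)
        finally show ?case using \<open>k = 0\<close> by simp
      qed
    qed
  next
    case (Suc k')
    have k'K: "k' < K" using kK Suc by simp
    have Qk: "F (indc_y M tn ?h F yn b0 b c Y k' (Suc j)) = F (Y k' j (lst k'))" if "j < M" for j
      using Q Suc that by simp
    show ?thesis
    proof (intro allI impI)
      fix m show "m \<le> M \<Longrightarrow> indc_y M tn ?h F yn b0 b c Y k m = yn + H *\<^sub>R ev ?g I (yc k m)"
      proof (induction m)
        case 0 then show ?case using Suc by (simp add: ev_zero)
      next
        case (Suc m)
        then have m: "m < M" by simp
        have "indc_y M tn ?h F yn b0 b c Y k (Suc m)
            = indc_y M tn ?h F yn b0 b c Y k m
              + ?h *\<^sub>R (\<Sum>j<M. WC M m 1 (Suc j) *\<^sub>R F (Y k' j (lst k')))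
              + ?h *\<^sub>R (\<Sum>i<s. b $ i *\<^sub>R (F (Y k m i)
                 - (\<Sum>j<M. WP M m (c $ i) (Suc j) *\<^sub>R F (Y k' j (lst k')))))"
          using \<open>k = Suc k'\<close> by (simp add: quadS_eq'[OF hpos] quadP_eq'[OF hne] Qk)
        also have "\<dots> = yn + H *\<^sub>R ev ?g I (yc k (Suc m))"
          using ev_ycS[OF k'K m, of ?g] Suc \<open>k = Suc k'\<close>
          by (simp add: scaleR_add_right)
        finally show ?case .
      qed
    qed
  qed
qed

lemma rhs0:
  fixes F :: "'a::real_vector \<Rightarrow> 'a" and Y :: "nat \<Rightarrow> nat \<Rightarrow> nat \<Rightarrow> 'a"
  assumes H: "H > 0" and m: "m < M"
  shows "indc_y M tn (H / real M) F yn b0 b c Y 0 m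
           + (H / real M) *\<^sub>R (\<Sum>j<dim_col A0. A0 $$ (i, j) *\<^sub>R F (Y 0 m j))
         = yn + H *\<^sub>R ev (\<lambda>(k, m, i). F (Y k m i)) I (sc (0, m, i))"
proof -
  have "indc_y M tn (H / real M) F yn b0 b c Y 0 m = yn + H *\<^sub>R ev (\<lambda>(k, m, i). F (Y k m i)) I (yc 0 m)"
    using Y_rep[OF H, where k=0 and tn=tn and F=F and yn=yn and Y=Y] m by simp
  then show ?thesis using ev_sc0[OF m, of "\<lambda>(k, m, i). F (Y k m i)" i] A0_carr
    by (simp add: scaleR_add_right)
qed

lemma rhsS:
  fixes F :: "'a::real_vector \<Rightarrow> 'a" and Y :: "nat \<Rightarrow> nat \<Rightarrow> nat \<Rightarrow> 'a"
  assumes H: "H > 0" and k: "k < K" and m: "m < M"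
    and Q: "\<forall>k'<Suc k. \<forall>m<M. Y k' m (lst k') = indc_y M tn (H / real M) F yn b0 b c Y k' (Suc m)"
  shows "indc_y M tn (H / real M) F yn b0 b c Y (Suc k) m
            + (H / real M) *\<^sub>R quadSc M tn (H / real M) m (c $ i) (\<lambda>j. F (indc_y M tn (H / real M) F yn b0 b c Y k j))
            + (H / real M) *\<^sub>R (\<Sum>j < dim_col a. (a $$ (i, j)) *\<^sub>R
                 (F (Y (Suc k) m j) - quadP M tn (H / real M) m (c $ j) (\<lambda>j'. F (indc_y M tn (H / real M) F yn b0 b c Y k j'))))
         = yn + H *\<^sub>R ev (\<lambda>(k, m, i). F (Y k m i)) I (sc (Suc k, m, i))"
proof -
  let ?h = "H / real M"
  have hpos: "?h > 0" using H M1 by simp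
  have hne: "?h \<noteq> 0" using H M1 by simp
  have Qk: "F (indc_y M tn ?h F yn b0 b c Y k (Suc j)) = F (Y k j (lst k))" if "j < M" for j
    using Q that by simp
  have "indc_y M tn (H / real M) F yn b0 b c Y (Suc k) m = yn + H *\<^sub>R ev (\<lambda>(k, m, i). F (Y k m i)) I (yc (Suc k) m)"
    using Y_rep[OF H, where k="Suc k" and tn=tn and F=F and yn=yn and Y=Y] m k Q by simp
  then show ?thesis using ev_scS[OF k m, of "\<lambda>(k, m, i). F (Y k m i)" i] a_carr
    by (simp add: scaleR_add_right quadSc_eq'[OF hpos] quadP_eq'[OF hne] Qk)
qed

lemma bnd1K: "(\<forall>k\<in>{1..K}. P k) \<longleftrightarrow> (\<forall>k<K. P (Suc k))"
proof
  assume "\<forall>k\<in>{1..K}. P k" then show "\<forall>k<K. P (Suc k)" by auto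
next
  assume A: "\<forall>k<K. P (Suc k)"
  show "\<forall>k\<in>{1..K}. P k"
  proof
    fix k assume "k \<in> {1..K}"
    then have "k = Suc (k - 1)" "k - 1 < K" by auto
    then show "P k" using A by metis
  qed
qed

lemma forall_I: "(\<forall>(k, m, i)\<in>I. P k m i) \<longleftrightarrow>
   (\<forall>m<M. \<forall>i<s0. P 0 m i) \<and> (\<forall>k<K. \<forall>m<M. \<forall>i<s. P (Suc k) m i)"
proof
  assume A: "\<forall>(k, m, i)\<in>I. P k m i"
  show "(\<forall>m<M. \<forall>i<s0. P 0 m i) \<and> (\<forall>k<K. \<forall>m<M. \<forall>i<s. P (Suc k) m i)"
  proof
    show "\<forall>m<M. \<forall>i<s0. P 0 m i" using A unfolding indc_index_def by auto
    show "\<forall>k<K. \<forall>m<M. \<forall>i<s. P (Suc k) m i"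
    proof (intro allI impI)
      fix k m i assume "k < K" "m < M" "i < s"
      then have "(Suc k, m, i) \<in> I" unfolding indc_index_def by auto
      then show "P (Suc k) m i" using A by auto
    qed
  qed
next
  assume A: "(\<forall>m<M. \<forall>i<s0. P 0 m i) \<and> (\<forall>k<K. \<forall>m<M. \<forall>i<s. P (Suc k) m i)"
  show "\<forall>(k, m, i)\<in>I. P k m i"
  proof (clarify)
    fix k m i assume mem: "(k, m, i) \<in> I"
    show "P k m i"
    proof (cases k)
      case 0 then show ?thesis using A mem unfolding indc_index_def by auto
    next
      case (Suc k') then show ?thesis using A mem unfolding indc_index_def by auto
    qed
  qed
qed

lemma main_equiv:
  fixes F :: "'a::real_vector \<Rightarrow> 'a" and Y :: "nat \<Rightarrow> nat \<Rightarrow> nat \<Rightarrow> 'a"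
  assumes H: "H > 0"
  shows "indc_stage_eqs M K A0 b0 a b c tn H F yn Y \<longleftrightarrow>
          (\<forall>(k, m, i)\<in>I. Y k m i = yn + H *\<^sub>R ev (\<lambda>(k, m, i). F (Y k m i)) I (sc (k, m, i)))"
    (is "?L \<longleftrightarrow> ?R")
    and "indc_stage_eqs M K A0 b0 a b c tn H F yn Y \<Longrightarrow>
          indc_output M K b0 b c tn H F yn Y = Y K (M - 1) (lst K)"
proof -
  let ?h = "H / real M"
  let ?yv = "indc_y M tn ?h F yn b0 b c Y"
  let ?g = "\<lambda>(k, m, i). F (Y k m i)"
  have hpos: "?h > 0" using H M1 by simp
  have unf: "?L \<longleftrightarrow>
       (\<forall>m < M. \<forall>i < s0.
          Y 0 m i = ?yv 0 m + ?h *\<^sub>R (\<Sum>j < dim_col A0. (A0 $$ (i, j)) *\<^sub>R F (Y 0 m j))) \<and>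
       (\<forall>k < K. \<forall>m < M. \<forall>i < s.
          Y (Suc k) m i = ?yv (Suc k) m
            + ?h *\<^sub>R quadSc M tn ?h m (c $ i) (\<lambda>j. F (?yv k j))
            + ?h *\<^sub>R (\<Sum>j < dim_col a. (a $$ (i, j)) *\<^sub>R
                 (F (Y (Suc k) m j) - quadP M tn ?h m (c $ j) (\<lambda>j'. F (?yv k j')))))"
    unfolding indc_stage_eqs_def Let_def bnd1K using A0_carr a_carr by simp
  have Rpt: "?R \<longleftrightarrow> (\<forall>m<M. \<forall>i<s0. Y 0 m i = yn + H *\<^sub>R ev ?g I (sc (0, m, i))) \<and>
           (\<forall>k<K. \<forall>m<M. \<forall>i<s. Y (Suc k) m i = yn + H *\<^sub>R ev ?g I (sc (Suc k, m, i)))"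
    by (rule forall_I)
  have QL: "\<forall>k'<Suc k. \<forall>m<M. Y k' m (lst k') = ?yv k' (Suc m)" if L: ?L and kK: "k \<le> K" for k
  proof (intro allI impI)
    fix k' m assume k': "k' < Suc k" and m: "m < M"
    show "Y k' m (lst k') = ?yv k' (Suc m)"
    proof (cases k')
      case 0
      have "Y 0 m (s0 - 1) = ?yv 0 m + ?h *\<^sub>R (\<Sum>j < dim_col A0. (A0 $$ (s0 - 1, j)) *\<^sub>R F (Y 0 m j))"
        using L unfolding unf using m s0_pos by simp
      also have "\<dots> = ?yv 0 (Suc m)" using A0_carr A0_last by simp
      finally show ?thesis using 0 by (simp add: lst_def)
    next
      case (Suc k'')
      have k'': "k'' < K" using Suc k' kK by simp
      have "Y (Suc k'') m (s - 1) = ?yv (Suc k'') m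
            + ?h *\<^sub>R quadSc M tn ?h m (c $ (s - 1)) (\<lambda>j. F (?yv k'' j))
            + ?h *\<^sub>R (\<Sum>j < dim_col a. (a $$ (s - 1, j)) *\<^sub>R
                 (F (Y (Suc k'') m j) - quadP M tn ?h m (c $ j) (\<lambda>j'. F (?yv k'' j'))))"
        using L unfolding unf using m s_pos k'' by simp
      also have "\<dots> = ?yv (Suc k'') (Suc m)" using a_carr a_last c_last by (simp add: quadSc_1)
      finally show ?thesis using Suc by (simp add: lst_def)
    qed
  qed
  have QR: "\<forall>k'<Suc k. \<forall>m<M. Y k' m (lst k') = ?yv k' (Suc m)" if R: ?R and kK: "k \<le> K" for k
    using kK
  proof (induction k)
    case 0
    show ?case
    proof (intro allI impI)
      fix k' m assume "k' < Suc 0" "m < M"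
      then have "k' = 0" "Suc m \<le> M" by auto
      have "Y 0 m (lst 0) = yn + H *\<^sub>R ev ?g I (sc (0, m, lst 0))"
        using R \<open>m < M\<close> lst_in[of 0 m] by auto
      also have "\<dots> = ?yv 0 (Suc m)" unfolding sc_last
        using Y_rep[OF H, where k=0 and tn=tn and F=F and yn=yn and Y=Y, rule_format, OF _ _ \<open>Suc m \<le> M\<close>] by simp
      finally show "Y k' m (lst k') = ?yv k' (Suc m)" using \<open>k' = 0\<close> by simp
    qed
  next
    case (Suc k)
    then have IH: "\<forall>k'<Suc k. \<forall>m<M. Y k' m (lst k') = ?yv k' (Suc m)" by simp
    show ?case
    proof (intro allI impI)
      fix k' m assume k': "k' < Suc (Suc k)" and m: "m < M"
      show "Y k' m (lst k') = ?yv k' (Suc m)"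
      proof (cases "k' < Suc k")
        case True then show ?thesis using IH m by simp
      next
        case False
        then have k'e: "k' = Suc k" using k' by simp
        have "Y k' m (lst k') = yn + H *\<^sub>R ev ?g I (sc (k', m, lst k'))"
          using R m lst_in[of k' m] Suc.prems k'e by auto
        also have "\<dots> = ?yv k' (Suc m)" unfolding sc_last
          using Y_rep[OF H, where k=k' and tn=tn and F=F and yn=yn and Y=Y, rule_format, of "Suc m"] m IH Suc.prems k'e
          by (simp del: yc.simps indc_y.simps)
        finally show ?thesis .
      qed
    qed
  qed
  show "?L \<longleftrightarrow> ?R"
  proof
    assume L: ?L
    have Q: "\<forall>k'<Suc k. \<forall>m<M. Y k' m (lst k') = ?yv k' (Suc m)" if "k < K" for k
      using QL[OF L, of k] that by simp
    show ?R unfolding Rpt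
    proof (intro conjI allI impI)
      fix m i assume m: "m < M" and i: "i < s0"
      show "Y 0 m i = yn + H *\<^sub>R ev ?g I (sc (0, m, i))"
        using L unfolding unf using m i rhs0[OF H m, where tn=tn and F=F and yn=yn and Y=Y and i=i] by simp
    next
      fix k m i assume k: "k < K" and m: "m < M" and i: "i < s"
      show "Y (Suc k) m i = yn + H *\<^sub>R ev ?g I (sc (Suc k, m, i))"
        using L unfolding unf using k m i rhsS[OF H k m Q[OF k], where i=i] by simp
    qed
  next
    assume R: ?R
    have Q: "\<forall>k'<Suc k. \<forall>m<M. Y k' m (lst k') = ?yv k' (Suc m)" if "k < K" for k
      using QR[OF R, of k] that by simp
    show ?L unfolding unf
    proof (intro conjI allI impI)
      fix m i assume m: "m < M" and i: "i < s0"
      show "Y 0 m i = ?yv 0 m + ?h *\<^sub>R (\<Sum>j < dim_col A0. (A0 $$ (i, j)) *\<^sub>R F (Y 0 m j))"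
        using R unfolding Rpt using m i rhs0[OF H m, where tn=tn and F=F and yn=yn and Y=Y and i=i] by simp
    next
      fix k m i assume k: "k < K" and m: "m < M" and i: "i < s"
      show "Y (Suc k) m i = ?yv (Suc k) m
            + ?h *\<^sub>R quadSc M tn ?h m (c $ i) (\<lambda>j. F (?yv k j))
            + ?h *\<^sub>R (\<Sum>j < dim_col a. (a $$ (i, j)) *\<^sub>R
                 (F (Y (Suc k) m j) - quadP M tn ?h m (c $ j) (\<lambda>j'. F (?yv k j'))))"
        using R unfolding Rpt using k m i rhsS[OF H k m Q[OF k], where i=i] by simp
    qed
  qed
  assume L: ?L
  have "Y K (M - 1) (lst K) = ?yv K (Suc (M - 1))"
    using QL[OF L, of K] M1 by simp
  then show "indc_output M K b0 b c tn H F yn Y = Y K (M - 1) (lst K)"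
    unfolding indc_output_def using M1 by simp
qed

lemma ev_yc0_zero: "m \<le> M \<Longrightarrow> \<forall>m'<m. \<forall>i<s0. x (0, m', i) = 0 \<Longrightarrow> ev x I (yc 0 m) = (0::real)"
proof (induction m)
  case 0 then show ?case by (simp add: ev_zero)
next
  case (Suc m)
  then have "ev x I (yc 0 m) = 0" by simp
  then show ?case using ev_yc0[of m x] Suc.prems by simp
qed

lemma ev_ycS_zero: "k < K \<Longrightarrow> m \<le> M \<Longrightarrow> \<forall>m'<m. \<forall>i<s. x (Suc k, m', i) = 0
   \<Longrightarrow> \<forall>j<M. x (k, j, lst k) = 0 \<Longrightarrow> ev x I (yc (Suc k) m) = (0::real)"
proof (induction m)
  case 0 then show ?case by (simp add: ev_zero)
next
  case (Suc m)
  then have "ev x I (yc (Suc k) m) = 0" by simp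
  then show ?case using ev_ycS[of k m x] Suc.prems by simp
qed

lemma kernel:
  assumes h: "\<forall>p\<in>I. ev x I (sc p) = (0::real)"
  shows "\<forall>p\<in>I. x p = 0"
proof -
  have Mpos: "real M > 0" using M1 by simp
  have main: "\<forall>m<M. \<forall>i<(if k = 0 then s0 else s). x (k, m, i) = 0" if "k \<le> K" for k
    using that
  proof (induction k)
    case 0
    have "\<forall>i<s0. x (0, m, i) = 0" if "m < M" for m
      using that
    proof (induction m rule: less_induct)
      case (less m)
      have e: "ev x I (yc 0 m) = 0" using ev_yc0_zero[of m x] less by simp
      have "(\<Sum>j<s0. A0 $$ (i, j) * x (0, m, j)) = 0" if i: "i < s0" for i
      proof -
        have "(0, m, i) \<in> I" using i less.prems unfolding indc_index_def by simp
        then have "ev x I (sc (0, m, i)) = 0" using h by blast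
        then show ?thesis using ev_sc0[OF less.prems, of x i] e Mpos by simp
      qed
      then show ?case using inv_kernel[OF inv0 A0_carr, of "\<lambda>j. x (0, m, j)"] by blast
    qed
    then show ?case by simp
  next
    case (Suc k)
    then have kK: "k < K" by simp
    have prev: "\<forall>j<M. x (k, j, lst k) = 0" using Suc lst_lt[of k] by auto
    have "\<forall>i<s. x (Suc k, m, i) = 0" if "m < M" for m
      using that
    proof (induction m rule: less_induct)
      case (less m)
      have e: "ev x I (yc (Suc k) m) = 0" using ev_ycS_zero[OF kK, of m x] less prev by simp
      have "(\<Sum>j<s. a $$ (i, j) * x (Suc k, m, j)) = 0" if i: "i < s" for i
      proof -
        have "(Suc k, m, i) \<in> I" using i less.prems kK unfolding indc_index_def by simp
        then have "ev x I (sc (Suc k, m, i)) = 0" using h by blast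
        then show ?thesis using ev_scS[OF kK less.prems, of x i] e Mpos prev by simp
      qed
      then show ?case using inv_kernel[OF inva a_carr, of "\<lambda>j. x (Suc k, m, j)"] by blast
    qed
    then show ?case by simp
  qed
  show ?thesis
  proof
    fix p assume p: "p \<in> I"
    obtain k m i where pe: "p = (k, m, i)" by (cases p) auto
    show "x p = 0" using main[of k] p unfolding pe indc_index_def by auto
  qed
qed

lemma final:
  shows "\<exists>(A :: real mat) (bb :: real vec) (\<sigma> :: nat \<times> nat \<times> nat \<Rightarrow> nat).
           stiffly_accurate A bb \<and> invertible_mat A \<and>
           bij_betw \<sigma> (indc_index M K (dim_vec b0) (dim_vec b)) {..< dim_row A} \<and>
           (\<forall>(F :: 'a::real_vector \<Rightarrow> 'a) yn tn H (Y :: nat \<Rightarrow> nat \<Rightarrow> nat \<Rightarrow> 'a).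
              H > 0 \<longrightarrow>
              (let Z = (\<lambda>l. case inv_into (indc_index M K (dim_vec b0) (dim_vec b)) \<sigma> l of
                               (k, m, i) \<Rightarrow> Y k m i) in
                 (indc_stage_eqs M K A0 b0 a b c tn H F yn Y \<longleftrightarrow> rk_stage_eqs A H F yn Z) \<and>
                 (indc_stage_eqs M K A0 b0 a b c tn H F yn Y \<longrightarrow>
                    indc_output M K b0 b c tn H F yn Y = rk_output bb H F yn Z)))"
proof -
  define plast where "plast = (K, M - 1, lst K)"
  have pI: "plast \<in> I" unfolding plast_def using lst_in[of K "M - 1"] M1 by simp
  define I' where "I' = I - {plast}"
  have finI': "finite I'" unfolding I'_def using finI by simp
  define n' where "n' = card I'"
  obtain f where f: "bij_betw f {0..<n'} I'"
    using ex_bij_betw_nat_finite[OF finI'] unfolding n'_def by blast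
  define \<sigma> where "\<sigma> p = (if p = plast then n' else inv_into {0..<n'} f p)" for p
  have b1: "bij_betw (inv_into {0..<n'} f) I' {0..<n'}" using bij_betw_inv_into[OF f] .
  have b2: "bij_betw \<sigma> I' {0..<n'}"
    using b1 by (rule bij_betw_cong[THEN iffD1, rotated]) (simp add: \<sigma>_def I'_def)
  have b3: "bij_betw \<sigma> (I' \<union> {plast}) ({0..<n'} \<union> {\<sigma> plast})"
    by (rule notIn_Un_bij_betw[OF _ _ b2]) (auto simp: I'_def \<sigma>_def)
  define N where "N = Suc n'"
  have IU: "I' \<union> {plast} = I" unfolding I'_def using pI by auto
  have NU: "{0..<n'} \<union> {\<sigma> plast} = {..<N}" unfolding N_def \<sigma>_def by auto
  have bs: "bij_betw \<sigma> I {..<N}" using b3 unfolding IU NU .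
  define \<tau> where "\<tau> = inv_into I \<sigma>"
  have bt: "bij_betw \<tau> {..<N} I" unfolding \<tau>_def using bij_betw_inv_into[OF bs] .
  have t_in: "r < N \<Longrightarrow> \<tau> r \<in> I" for r using bt by (auto simp: bij_betw_def)
  have s_t: "r < N \<Longrightarrow> \<sigma> (\<tau> r) = r" for r
    unfolding \<tau>_def using bs by (simp add: bij_betw_inv_into_right)
  have t_s: "p \<in> I \<Longrightarrow> \<tau> (\<sigma> p) = p" for p
    unfolding \<tau>_def using bs by (simp add: bij_betw_imp_inj_on inv_into_f_f)
  have s_in: "p \<in> I \<Longrightarrow> \<sigma> p < N" for p using bs by (auto simp: bij_betw_def)
  have tlast: "\<tau> (N - 1) = plast" using t_s[OF pI] unfolding \<sigma>_def N_def by simp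
  define A where "A = mat N N (\<lambda>(r, c). sc (\<tau> r) (\<tau> c))"
  define bb where "bb = row A (N - 1)"
  have Ac: "A \<in> carrier_mat N N" unfolding A_def by simp
  have keysum: "(\<Sum>c<N. A $$ (r, c) *\<^sub>R G (\<tau> c)) = ev G I (sc (\<tau> r))" if r: "r < N"
    for r and G :: "nat \<times> nat \<times> nat \<Rightarrow> 'b::real_vector"
  proof -
    have "(\<Sum>c<N. A $$ (r, c) *\<^sub>R G (\<tau> c)) = (\<Sum>c<N. sc (\<tau> r) (\<tau> c) *\<^sub>R G (\<tau> c))"
      using r unfolding A_def by simp
    also have "\<dots> = (\<Sum>q\<in>I. sc (\<tau> r) q *\<^sub>R G q)"
      using sum.reindex_bij_betw[OF bt, of "\<lambda>q. sc (\<tau> r) q *\<^sub>R G q"] .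
    finally show ?thesis unfolding ev_def .
  qed
  have stiff: "stiffly_accurate A bb"
    unfolding stiffly_accurate_def Let_def bb_def using Ac by (simp add: N_def)
  have detA: "det A \<noteq> 0"
  proof
    assume "det A = 0"
    then obtain v where v: "v \<in> carrier_vec N" "v \<noteq> 0\<^sub>v N" "A *\<^sub>v v = 0\<^sub>v N"
      using det_0_iff_vec_prod_zero_field[OF Ac] by blast
    define x where "x p = v $ \<sigma> p" for p
    have "\<forall>p\<in>I. ev x I (sc p) = 0"
    proof
      fix p assume p: "p \<in> I"
      have "ev x I (sc p) = (\<Sum>c<N. A $$ (\<sigma> p, c) *\<^sub>R x (\<tau> c))"
        using keysum[OF s_in[OF p], of x] t_s[OF p] by simp
      also have "\<dots> = (\<Sum>c<N. A $$ (\<sigma> p, c) * v $ c)"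
        unfolding x_def using s_t by simp
      also have "\<dots> = (A *\<^sub>v v) $ (\<sigma> p)"
        using Ac v(1) s_in[OF p] by (simp add: scalar_prod_def atLeast0LessThan)
      also have "\<dots> = 0" using v(3) s_in[OF p] by simp
      finally show "ev x I (sc p) = 0" .
    qed
    then have x0: "\<forall>p\<in>I. x p = 0" by (rule kernel)
    have "v = 0\<^sub>v N"
    proof (rule eq_vecI)
      fix i assume "i < dim_vec (0\<^sub>v N :: real vec)"
      then have i: "i < N" by simp
      have "v $ i = x (\<tau> i)" unfolding x_def using s_t[OF i] by simp
      then show "v $ i = 0\<^sub>v N $ i" using x0 t_in[OF i] i by simp
    qed (use v(1) in simp)
    then show False using v(2) by simp
  qed
  have invA: "invertible_mat A"
  proof -
    have "A \<in> Units (ring_mat TYPE(real) N ())" by (rule det_non_zero_imp_unit[OF Ac detA])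
    then obtain B where B: "B \<in> carrier_mat N N" "B * A = 1\<^sub>m N" "A * B = 1\<^sub>m N"
      unfolding Units_def ring_mat_def by auto
    then show ?thesis unfolding invertible_mat_def inverts_mat_def square_mat.simps using Ac by auto
  qed
  have dimA: "dim_row A = N" using Ac by simp
  show ?thesis
  proof (intro exI conjI allI impI)
    show "stiffly_accurate A bb" by (rule stiff)
    show "invertible_mat A" by (rule invA)
    show "bij_betw \<sigma> I {..<dim_row A}" unfolding dimA by (rule bs)
  next
    fix F :: "'a \<Rightarrow> 'a" and yn :: 'a and tn H :: real and Y :: "nat \<Rightarrow> nat \<Rightarrow> nat \<Rightarrow> 'a"
    assume H: "H > 0"
    define Y' where "Y' = (\<lambda>(k, m, i). Y k m i)"
    define g where "g = (\<lambda>(k, m, i). F (Y k m i))"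
    have gY: "g q = F (Y' q)" for q unfolding g_def Y'_def by (cases q) auto
    define Z where "Z l = Y' (\<tau> l)" for l
    have Zeq: "(\<lambda>l. case inv_into I \<sigma> l of (k, m, i) \<Rightarrow> Y k m i) = Z"
      unfolding Z_def Y'_def \<tau>_def by simp
    have rsum: "(\<Sum>c<N. A $$ (r, c) *\<^sub>R F (Z c)) = ev g I (sc (\<tau> r))" if "r < N" for r
      using keysum[OF that, of g] unfolding Z_def gY by simp
    have rk_iff: "rk_stage_eqs A H F yn Z \<longleftrightarrow> (\<forall>r<N. Z r = yn + H *\<^sub>R ev g I (sc (\<tau> r)))"
      unfolding rk_stage_eqs_def using Ac rsum by simp
    also have "\<dots> \<longleftrightarrow> (\<forall>p\<in>I. Y' p = yn + H *\<^sub>R ev g I (sc p))"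
    proof
      assume A1: "\<forall>r<N. Z r = yn + H *\<^sub>R ev g I (sc (\<tau> r))"
      show "\<forall>p\<in>I. Y' p = yn + H *\<^sub>R ev g I (sc p)"
      proof
        fix p assume p: "p \<in> I"
        show "Y' p = yn + H *\<^sub>R ev g I (sc p)"
          using A1 s_in[OF p] t_s[OF p] unfolding Z_def by metis
      qed
    next
      assume A2: "\<forall>p\<in>I. Y' p = yn + H *\<^sub>R ev g I (sc p)"
      show "\<forall>r<N. Z r = yn + H *\<^sub>R ev g I (sc (\<tau> r))"
        using A2 t_in unfolding Z_def by blast
    qed
    also have "\<dots> \<longleftrightarrow> (\<forall>(k, m, i)\<in>I. Y k m i = yn + H *\<^sub>R ev (\<lambda>(k, m, i). F (Y k m i)) I (sc (k, m, i)))"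
      unfolding Y'_def g_def by (auto simp: split_beta)
    also have "\<dots> \<longleftrightarrow> indc_stage_eqs M K A0 b0 a b c tn H F yn Y"
      using main_equiv(1)[OF H, of tn F yn Y] by simp
    finally have eqv: "indc_stage_eqs M K A0 b0 a b c tn H F yn Y \<longleftrightarrow> rk_stage_eqs A H F yn Z" by simp
    have outp: "indc_output M K b0 b c tn H F yn Y = rk_output bb H F yn Z"
      if L: "indc_stage_eqs M K A0 b0 a b c tn H F yn Y"
    proof -
      have rk: "rk_stage_eqs A H F yn Z" using L eqv by simp
      have N1: "N - 1 < N" unfolding N_def by simp
      have "rk_output bb H F yn Z = yn + H *\<^sub>R (\<Sum>j<N. A $$ (N - 1, j) *\<^sub>R F (Z j))"
        unfolding rk_output_def bb_def using Ac N1 by simp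
      also have "\<dots> = Z (N - 1)" using rk N1 Ac unfolding rk_stage_eqs_def by simp
      also have "\<dots> = Y K (M - 1) (lst K)" unfolding Z_def tlast Y'_def plast_def by simp
      also have "\<dots> = indc_output M K b0 b c tn H F yn Y" using main_equiv(2)[OF H L] by simp
      finally show ?thesis by simp
    qed
    show "let Z = (\<lambda>l. case inv_into I \<sigma> l of (k, m, i) \<Rightarrow> Y k m i) in
                 (indc_stage_eqs M K A0 b0 a b c tn H F yn Y \<longleftrightarrow> rk_stage_eqs A H F yn Z) \<and>
                 (indc_stage_eqs M K A0 b0 a b c tn H F yn Y \<longrightarrow>
                    indc_output M K b0 b c tn H F yn Y = rk_output bb H F yn Z)"
      unfolding Let_def Zeq using eqv outp by blast
  qed
qed

end

theorem proposition7p2: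
  fixes M K :: nat and A0 a :: "real mat" and b0 b c :: "real vec"
  assumes "M \<ge> 1"
    and "stiffly_accurate A0 b0" and "invertible_mat A0"
    and "stiffly_accurate a b" and "invertible_mat a"
    and "dim_vec c = dim_vec b" and "\<forall>i < dim_vec c. c $ i = (\<Sum>j < dim_vec b. a $$ (i, j))"
    and "(\<Sum>i < dim_vec b. b $ i) = 1"
  shows "\<exists>(A :: real mat) (bb :: real vec) (\<sigma> :: nat \<times> nat \<times> nat \<Rightarrow> nat).
           stiffly_accurate A bb \<and> invertible_mat A \<and>
           bij_betw \<sigma> (indc_index M K (dim_vec b0) (dim_vec b)) {..< dim_row A} \<and>
           (\<forall>(F :: 'a::real_vector \<Rightarrow> 'a) yn tn H (Y :: nat \<Rightarrow> nat \<Rightarrow> nat \<Rightarrow> 'a).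
              H > 0 \<longrightarrow>
              (let Z = (\<lambda>l. case inv_into (indc_index M K (dim_vec b0) (dim_vec b)) \<sigma> l of
                               (k, m, i) \<Rightarrow> Y k m i) in
                 (indc_stage_eqs M K A0 b0 a b c tn H F yn Y \<longleftrightarrow> rk_stage_eqs A H F yn Z) \<and>
                 (indc_stage_eqs M K A0 b0 a b c tn H F yn Y \<longrightarrow>
                    indc_output M K b0 b c tn H F yn Y = rk_output bb H F yn Z)))"
  proof -
  interpret indc_setup M K A0 a b0 b c using assms by unfold_locales
  show ?thesis by (rule final)
qed

end
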